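(* Let $n$ be even, and let $S^{[1]},S^{[2]}\subset\mathbb F_2^n$ be disjoint sets with $\#S^{[1]}+\#S^{[2]}<2^n$. Let $f^*_{[1]}:S^{[1]}\to\mathbb F_2$ and $f^*_{[2]}:S^{[2]}\to\mathbb F_2$ be arbitrary, and define $W:\mathbb F_2^n\to\mathbb Z$ by $W(u)=0$ for $u\notin S^{[1]}\cup S^{[2]}$, $W(u)=(-1)^{f^*_{[1]}(u)}2^{(n+2)/2}$ for $u\in S^{[1]}$, $W(u)=(-1)^{f^*_{[2]}(u)}2^{n/2}$ for $u\in S^{[2]}$. For $i=1,2$ put $X_i(u)=\sum_{\omega\in S^{[i]}}(-1)^{f^*_{[i]}(\omega)\oplus u\cdot\omega}$. Then there exists a Boolean function $f:\mathbb F_2^n\to\mathbb F_2$ with $W_f=W$ if and only if for every $u\in\mathbb F_2^n$ there is $\varepsilon_u\in\{0,1\}$ with $2X_1(u)+X_2(u)=(-1)^{\varepsilon_u}2^{n/2}$.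
   Context: For $f:\mathbb F_2^n\to\mathbb F_2$, $W_f(\omega)=\sum_{x\in\mathbb F_2^n}(-1)^{f(x)\oplus\omega\cdot x}$, where $\omega\cdot x$ is the usual dot product over $\mathbb F_2$. *)

theory Defs
  imports "HOL-Analysis.Analysis"
begin

text \<open>Vectors of F_2^n are modelled as bool^'n (n = CARD('n)); addition in F_2 is (\<noteq>) on bool.\<close>

definition dotF2 :: "bool^'n \<Rightarrow> bool^'n \<Rightarrow> bool" where
  "dotF2 u x = odd (card {i. u $ i \<and> x $ i})"

definition walsh :: "(bool^'n \<Rightarrow> bool) \<Rightarrow> bool^'n \<Rightarrow> int" where
  "walsh f \<omega> = (\<Sum>x\<in>UNIV. (-1::int) ^ of_bool (f x \<noteq> dotF2 \<omega> x))"

definition Xsum :: "(bool^'n) set \<Rightarrow> (bool^'n \<Rightarrow> bool) \<Rightarrow> bool^'n \<Rightarrow> int" where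
  "Xsum S g u = (\<Sum>\<omega>\<in>S. (-1::int) ^ of_bool (g \<omega> \<noteq> dotF2 u \<omega>))"

end

theory Submission
  imports Defs
begin

definition chi :: "bool^'n \<Rightarrow> bool^'n \<Rightarrow> int" where
  "chi u x = (-1) ^ of_bool (dotF2 u x)"

lemma dot_sym: "dotF2 u x = dotF2 x u"
  unfolding dotF2_def by (simp add: conj_commute)

lemma chi_sym: "chi u x = chi x u" by (simp add: chi_def dot_sym)

lemma pow_odd: "(-1::int) ^ of_bool (odd k) = (-1) ^ k"
  by (simp add: minus_one_power_iff)

lemma chi_prod: "chi u x = (\<Prod>i\<in>UNIV. if u$i \<and> x$i then -1 else 1)"
proof -
  have "chi u x = (-1) ^ card {i. u$i \<and> x$i}" unfolding chi_def dotF2_def pow_odd ..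
  also have "\<dots> = (\<Prod>i\<in>{i. u$i \<and> x$i}. -1)" by simp
  also have "\<dots> = (\<Prod>i\<in>UNIV. if u$i \<and> x$i then -1 else 1)"
    by (simp add: prod.If_cases)
  finally show ?thesis .
qed

lemma chi_mult: "chi u x * chi v x = chi (\<chi> i. u$i \<noteq> v$i) x"
  unfolding chi_prod prod.distrib[symmetric] by (intro prod.cong) auto

lemma pm_mult: "(-1::int) ^ of_bool (a \<noteq> b) = (-1) ^ of_bool a * (-1) ^ of_bool b"
  by auto

lemma chi_sum_zero:
  fixes w :: "bool^'n"
  assumes "w \<noteq> (\<chi> i. False)"
  shows "(\<Sum>x\<in>UNIV. chi w x) = 0"
proof -
  obtain i where wi: "w$i" using assms
    by (auto simp: vec_eq_iff)
  define \<sigma> where "\<sigma> x = (\<chi> j. if j = i then \<not> x$j else x$j)" for x :: "bool^'n"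
  have inv: "\<sigma> (\<sigma> x) = x" for x unfolding \<sigma>_def by (simp add: vec_eq_iff)
  have bij: "bij \<sigma>" by (metis inv bijI' )
  have flip: "chi w (\<sigma> x) = - chi w x" for x
  proof -
    have "chi w (\<sigma> x) = (if w$i \<and> (\<sigma> x)$i then -1 else 1) *
        (\<Prod>j\<in>UNIV-{i}. if w$j \<and> (\<sigma> x)$j then -1 else 1)"
      unfolding chi_prod by (simp add: prod.remove)
    also have "(\<Prod>j\<in>UNIV-{i}. if w$j \<and> (\<sigma> x)$j then -1 else 1) =
        (\<Prod>j\<in>UNIV-{i}. if w$j \<and> x$j then -1 else (1::int))"
      by (intro prod.cong) (auto simp: \<sigma>_def)
    also have "chi w x = (if w$i \<and> x$i then -1 else 1) *
        (\<Prod>j\<in>UNIV-{i}. if w$j \<and> x$j then -1 else 1)"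
      unfolding chi_prod by (simp add: prod.remove)
    ultimately show ?thesis using wi by (auto simp: \<sigma>_def)
  qed
  have "(\<Sum>x\<in>UNIV. chi w x) = (\<Sum>x\<in>UNIV. chi w (\<sigma> x))"
    using sum.reindex_bij_betw[of \<sigma> UNIV UNIV "chi w"] bij by (simp add: bij_betw_def)
  also have "\<dots> = - (\<Sum>x\<in>UNIV. chi w x)" by (simp add: flip sum_negf)
  finally show ?thesis by simp
qed

lemma chi_sum: fixes w :: "bool^'n" shows "(\<Sum>x\<in>UNIV. chi w x) = (if w = (\<chi> i. False) then 2 ^ CARD('n) else 0)"
proof (cases "w = (\<chi> i. False)")
  case True
  have "chi (\<chi> i. False) x = 1" for x :: "bool^'n" by (simp add: chi_prod)
  then show ?thesis using True by simp
qed (simp add: chi_sum_zero)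

lemma inversion:
  fixes A :: "bool^'n \<Rightarrow> int"
  shows "(\<Sum>x\<in>UNIV. (\<Sum>\<nu>\<in>UNIV. A \<nu> * chi \<nu> x) * chi \<omega> x) = 2 ^ CARD('n) * A \<omega>"
proof -
  have "(\<Sum>x\<in>UNIV. (\<Sum>\<nu>\<in>UNIV. A \<nu> * chi \<nu> x) * chi \<omega> x)
      = (\<Sum>\<nu>\<in>UNIV. A \<nu> * (\<Sum>x\<in>UNIV. chi (\<chi> i. \<nu>$i \<noteq> \<omega>$i) x))"
  proof -
    have "(\<Sum>x\<in>UNIV. (\<Sum>\<nu>\<in>UNIV. A \<nu> * chi \<nu> x) * chi \<omega> x)
        = (\<Sum>x\<in>UNIV. \<Sum>\<nu>\<in>UNIV. A \<nu> * chi (\<chi> i. \<nu>$i \<noteq> \<omega>$i) x)"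
      by (simp add: sum_distrib_right mult.assoc chi_mult)
    also have "\<dots> = (\<Sum>\<nu>\<in>UNIV. \<Sum>x\<in>UNIV. A \<nu> * chi (\<chi> i. \<nu>$i \<noteq> \<omega>$i) x)"
      by (rule sum.swap)
    also have "\<dots> = (\<Sum>\<nu>\<in>UNIV. A \<nu> * (\<Sum>x\<in>UNIV. chi (\<chi> i. \<nu>$i \<noteq> \<omega>$i) x))"
      by (simp add: sum_distrib_left)
    finally show ?thesis .
  qed
  also have "\<dots> = (\<Sum>\<nu>\<in>UNIV. if \<nu> = \<omega> then A \<nu> * 2 ^ CARD('n) else 0)"
  proof (intro sum.cong refl)
    fix \<nu> :: "bool^'n"
    have e: "((\<chi> i. \<nu>$i \<noteq> \<omega>$i) = (\<chi> i. False)) = (\<nu> = \<omega>)" by (auto simp: vec_eq_iff)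
    show "A \<nu> * (\<Sum>x\<in>UNIV. chi (\<chi> i. \<nu>$i \<noteq> \<omega>$i) x) = (if \<nu> = \<omega> then A \<nu> * 2 ^ CARD('n) else 0)"
      unfolding chi_sum e by simp
  qed
  also have "\<dots> = 2 ^ CARD('n) * A \<omega>" by simp
  finally show ?thesis .
qed

lemma walsh_chi: "walsh f \<omega> = (\<Sum>x\<in>UNIV. (-1) ^ of_bool (f x) * chi \<omega> x)"
  unfolding walsh_def chi_def pm_mult ..

lemma Xsum_chi: "Xsum S g u = (\<Sum>\<omega>\<in>S. (-1) ^ of_bool (g \<omega>) * chi \<omega> u)"
  unfolding Xsum_def chi_def pm_mult dot_sym[of u] ..

theorem mainTheorem2:
  fixes S1 S2 :: "(bool^'n) set" and g1 g2 :: "bool^'n \<Rightarrow> bool" and W :: "bool^'n \<Rightarrow> int"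
  assumes "even CARD('n)"
    and "S1 \<inter> S2 = {}"
    and "card S1 + card S2 < 2 ^ CARD('n)"
    and "\<And>u. W u = (if u \<in> S1 then (-1) ^ of_bool (g1 u) * 2 ^ ((CARD('n) + 2) div 2)
                    else if u \<in> S2 then (-1) ^ of_bool (g2 u) * 2 ^ (CARD('n) div 2)
                    else 0)"
  shows "(\<exists>f :: bool^'n \<Rightarrow> bool. walsh f = W) \<longleftrightarrow>
         (\<forall>u. \<exists>\<epsilon>::nat \<in> {0,1}. 2 * Xsum S1 g1 u + Xsum S2 g2 u = (-1) ^ \<epsilon> * 2 ^ (CARD('n) div 2))"
proof -
  define h where "h = CARD('n) div 2"
  have pn: "(2::int) ^ CARD('n) = 2 ^ h * 2 ^ h"
    using assms(1) unfolding h_def by (metis dvd_mult_div_cancel mult_2 power_add)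
  have p2: "(2::int) ^ ((CARD('n) + 2) div 2) = 2 * 2 ^ h"
    unfolding h_def by simp
  have hnz: "(2::int) ^ h \<noteq> 0" by simp
  define T where "T x = (\<Sum>\<nu>\<in>UNIV. W \<nu> * chi \<nu> x)" for x
  have Wexp: "W \<nu> = 2 ^ h * (2 * (if \<nu> \<in> S1 then (-1) ^ of_bool (g1 \<nu>) else 0)
      + (if \<nu> \<in> S2 then (-1) ^ of_bool (g2 \<nu>) else 0))" for \<nu>
    using assms(2) assms(4)[of \<nu>] p2 unfolding h_def by auto
  have restr: "(\<Sum>\<nu>\<in>UNIV. (if \<nu> \<in> S then G \<nu> else 0) * chi \<nu> x) = (\<Sum>\<nu>\<in>S. G \<nu> * chi \<nu> x)"
    for S and G :: "bool^'n \<Rightarrow> int" and x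
  proof -
    have "(\<Sum>\<nu>\<in>UNIV. (if \<nu> \<in> S then G \<nu> else 0) * chi \<nu> x)
        = (\<Sum>\<nu>\<in>UNIV. if \<nu> \<in> S then G \<nu> * chi \<nu> x else 0)"
      by (intro sum.cong) auto
    also have "\<dots> = (\<Sum>\<nu>\<in>UNIV \<inter> S. G \<nu> * chi \<nu> x)"
      by (rule sum.inter_restrict[symmetric]) simp
    finally show ?thesis by simp
  qed
  have Tx: "T x = 2 ^ h * (2 * Xsum S1 g1 x + Xsum S2 g2 x)" for x
  proof -
    have "T x = 2 ^ h * (2 * (\<Sum>\<nu>\<in>UNIV. (if \<nu> \<in> S1 then (-1) ^ of_bool (g1 \<nu>) else 0) * chi \<nu> x)
       + (\<Sum>\<nu>\<in>UNIV. (if \<nu> \<in> S2 then (-1) ^ of_bool (g2 \<nu>) else 0) * chi \<nu> x))"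
      unfolding T_def Wexp by (simp add: sum_distrib_left sum.distrib algebra_simps)
    then show ?thesis unfolding restr Xsum_chi .
  qed
  show ?thesis
  proof
    assume "\<exists>f. walsh f = W"
    then obtain f where f: "walsh f = W" by blast
    show "\<forall>u. \<exists>\<epsilon>::nat \<in> {0,1}. 2 * Xsum S1 g1 u + Xsum S2 g2 u = (-1) ^ \<epsilon> * 2 ^ (CARD('n) div 2)"
    proof
      fix u
      have "T u = (\<Sum>\<nu>\<in>UNIV. (\<Sum>y\<in>UNIV. (-1) ^ of_bool (f y) * chi y \<nu>) * chi u \<nu>)"
        unfolding T_def f[symmetric] walsh_chi by (simp add: chi_sym)
      also have "\<dots> = 2 ^ CARD('n) * (-1) ^ of_bool (f u)"
        by (rule inversion)
      finally have "2 ^ h * (2 * Xsum S1 g1 u + Xsum S2 g2 u) = 2 ^ h * ((-1) ^ of_bool (f u) * 2 ^ h)"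
        unfolding Tx pn by (simp add: algebra_simps)
      then have "2 * Xsum S1 g1 u + Xsum S2 g2 u = (-1) ^ of_bool (f u) * 2 ^ h"
        using hnz by simp
      then show "\<exists>\<epsilon>::nat \<in> {0,1}. 2 * Xsum S1 g1 u + Xsum S2 g2 u = (-1) ^ \<epsilon> * 2 ^ (CARD('n) div 2)"
        unfolding h_def by (intro bexI[of _ "of_bool (f u)"]) auto
    qed
  next
    assume "\<forall>u. \<exists>\<epsilon>::nat \<in> {0,1}. 2 * Xsum S1 g1 u + Xsum S2 g2 u = (-1) ^ \<epsilon> * 2 ^ (CARD('n) div 2)"
    then obtain e where e: "\<And>u. e u \<in> {0::nat,1} \<and> 2 * Xsum S1 g1 u + Xsum S2 g2 u = (-1) ^ e u * 2 ^ h"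
      unfolding h_def by metis
    define f where "f u = (e u = 1)" for u
    have F: "(-1::int) ^ of_bool (f u) = (-1) ^ e u" for u
      using e[of u] unfolding f_def by auto
    have TF: "T x = 2 ^ CARD('n) * (-1) ^ of_bool (f x)" for x
      unfolding Tx F pn using e[of x] by (simp add: algebra_simps)
    have "walsh f \<omega> = W \<omega>" for \<omega>
    proof -
      have "2 ^ CARD('n) * walsh f \<omega> = (\<Sum>x\<in>UNIV. T x * chi \<omega> x)"
        unfolding walsh_chi TF by (simp add: sum_distrib_left algebra_simps)
      also have "\<dots> = 2 ^ CARD('n) * W \<omega>"
        unfolding T_def by (rule inversion)
      finally show ?thesis by simp
    qed
    then show "\<exists>f. walsh f = W" by blast
  qed
qed

end
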